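(* Fix $0<p<1$, $q=1-p$, and integers $L<U$ with $U-L\ge 4$. With the notation of the context, the function $x\mapsto\alpha(x)=\lim_{k\to\infty}\alpha_k(x)$ on the integers $x\in[L,U]$ is the unique solution of the linear system $$\alpha(x)=\begin{cases}0,&x=U,\\ q\,\alpha(x-1),&x=U-1,\\ pq\,\alpha(x)+q\,\alpha(x-1),&x=U-2,\\ pq\,\alpha(x)+p\,\alpha(x+2)-pq\,\alpha(x+1)+q\,\alpha(x-1),&L+1\le x\le U-3,\\ 1,&x=L,\end{cases}$$ and the function $x\mapsto\beta(x)=\lim_{k\to\infty}\beta_k(x)$ on the integers $x\in[L,U]$ is the unique solution of the linear system $$\beta(x)=\begin{cases}1,&x=U,\\ p+q\,\beta(x-1),&x=U-1,\\ p^2+pq\,\beta(x)+q\,\beta(x-1),&x=U-2,\\ pq\,\beta(x)+p\,\beta(x+2)-pq\,\beta(x+1)+q\,\beta(x-1),&L+1\le x\le U-3,\\ 0,&x=L.\end{cases}$$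
   Context: Let $\xi_1,\xi_2,\dots$ be i.i.d. random variables with values in $\{1,-1\}$, $\mathbb{P}(\xi_i=1)=p$, $\mathbb{P}(\xi_i=-1)=q:=1-p$. Define $X_k=-1$ if $\xi_k=-1$; $X_k=2$ if $\xi_k=\xi_{k-1}=1$ (for $k\ge 2$); and $X_k=1$ otherwise (in particular $X_1=1$ when $\xi_1=1$). Let $S_0=0$, $S_k=X_1+\dots+X_k$, and $S^x_k=x+S_k$. For integers $L<U$ and $k\ge 0$ let $\tau^x_k=\min\{l\in\{0,\dots,k\}: S^x_l\le L \text{ or } S^x_l\ge U\}$ if this set is nonempty, and $\tau^x_k=k$ otherwise. Let $\mathcal{A}^x_k=\bigcup_{l=0}^k\{\tau^x_k=l,\ S^x_l\le L\}$, $\mathcal{B}^x_k=\bigcup_{l=0}^k\{\tau^x_k=l,\ S^x_l\ge U\}$, $\alpha_k(x)=\mathbb{P}(\mathcal{A}^x_k)$, $\beta_k(x)=\mathbb{P}(\mathcal{B}^x_k)$. These sequences are nondecreasing in $k$, so the limits $\alpha(x),\beta(x)$ exist. *)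

theory Defs
  imports Complex_Main
begin

text \<open>A realization of the first k signs xi_1..xi_k is a bool list xs of length k,
  with xs ! (i-1) = True meaning xi_i = 1 and False meaning xi_i = -1.
  Its probability under the i.i.d. law with P(xi=1)=p is the product weight.\<close>

definition seq_weight :: "real \<Rightarrow> bool list \<Rightarrow> real" where
  "seq_weight p xs = (\<Prod>b\<leftarrow>xs. if b then p else 1 - p)"

definition Xstep :: "bool list \<Rightarrow> nat \<Rightarrow> int" where
  "Xstep xs i = (if \<not> xs ! (i - 1) then -1
                 else if i \<ge> 2 \<and> xs ! (i - 2) then 2 else 1)"

definition Ssum :: "bool list \<Rightarrow> nat \<Rightarrow> int" where
  "Ssum xs l = (\<Sum>i=1..l. Xstep xs i)"

definition Sx :: "int \<Rightarrow> bool list \<Rightarrow> nat \<Rightarrow> int" where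
  "Sx x xs l = x + Ssum xs l"

definition tau :: "int \<Rightarrow> int \<Rightarrow> int \<Rightarrow> nat \<Rightarrow> bool list \<Rightarrow> nat" where
  "tau L U x k xs =
     (if \<exists>l\<le>k. Sx x xs l \<le> L \<or> Sx x xs l \<ge> U
      then (LEAST l. l \<le> k \<and> (Sx x xs l \<le> L \<or> Sx x xs l \<ge> U))
      else k)"

definition eventA :: "int \<Rightarrow> int \<Rightarrow> int \<Rightarrow> nat \<Rightarrow> bool list \<Rightarrow> bool" where
  "eventA L U x k xs = (\<exists>l\<le>k. tau L U x k xs = l \<and> Sx x xs l \<le> L)"

definition eventB :: "int \<Rightarrow> int \<Rightarrow> int \<Rightarrow> nat \<Rightarrow> bool list \<Rightarrow> bool" where
  "eventB L U x k xs = (\<exists>l\<le>k. tau L U x k xs = l \<and> Sx x xs l \<ge> U)"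

definition alpha_k :: "real \<Rightarrow> int \<Rightarrow> int \<Rightarrow> nat \<Rightarrow> int \<Rightarrow> real" where
  "alpha_k p L U k x =
     (\<Sum>xs\<in>{xs :: bool list. length xs = k}. if eventA L U x k xs then seq_weight p xs else 0)"

definition beta_k :: "real \<Rightarrow> int \<Rightarrow> int \<Rightarrow> nat \<Rightarrow> int \<Rightarrow> real" where
  "beta_k p L U k x =
     (\<Sum>xs\<in>{xs :: bool list. length xs = k}. if eventB L U x k xs then seq_weight p xs else 0)"

definition alpha :: "real \<Rightarrow> int \<Rightarrow> int \<Rightarrow> int \<Rightarrow> real" where
  "alpha p L U x = lim (\<lambda>k. alpha_k p L U k x)"

definition beta :: "real \<Rightarrow> int \<Rightarrow> int \<Rightarrow> int \<Rightarrow> real" where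
  "beta p L U x = lim (\<lambda>k. beta_k p L U k x)"

end

theory Submission
  imports Defs
begin

definition stp :: "bool \<Rightarrow> bool \<Rightarrow> int" where
  "stp pr b = (if b then (if pr then 2 else 1) else -1)"

definition Xg :: "bool \<Rightarrow> bool list \<Rightarrow> nat \<Rightarrow> int" where
  "Xg pr xs i = (if \<not> xs ! (i - 1) then -1 else if (if i = 1 then pr else xs ! (i - 2)) then 2 else 1)"

definition Sg :: "bool \<Rightarrow> int \<Rightarrow> bool list \<Rightarrow> nat \<Rightarrow> int" where
  "Sg pr x xs l = x + (\<Sum>i=1..l. Xg pr xs i)"

lemma Sg_0[simp]: "Sg pr x xs 0 = x"
  by (simp add: Sg_def)

lemma Sg_Suc: "Sg pr x xs (Suc l) = Sg pr x xs l + Xg pr xs (Suc l)"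
  by (simp add: Sg_def)

lemma Xg_Cons_Suc: "1 \<le> i \<Longrightarrow> Xg pr (b # ys) (Suc i) = Xg b ys i"
  by (cases i) (auto simp: Xg_def nth_Cons split: nat.splits)

lemma Xg_Cons_1: "Xg pr (b # ys) (Suc 0) = stp pr b"
  by (simp add: Xg_def stp_def)

lemma Sg_Cons: "Sg pr x (b # ys) (Suc l) = Sg b (x + stp pr b) ys l"
proof (induction l)
  case 0
  then show ?case by (simp add: Sg_def Xg_Cons_1)
next
  case (Suc l)
  then show ?case by (simp add: Sg_Suc[of pr x "b#ys" "Suc l"] Sg_Suc[of b _ ys l] Xg_Cons_Suc)
qed

definition hit :: "int \<Rightarrow> int \<Rightarrow> (int \<Rightarrow> bool) \<Rightarrow> bool \<Rightarrow> int \<Rightarrow> bool list \<Rightarrow> nat \<Rightarrow> bool" where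
  "hit L U P pr x xs k = (\<exists>l\<le>k. P (Sg pr x xs l) \<and> (\<forall>j<l. L < Sg pr x xs j \<and> Sg pr x xs j < U))"

lemma hit_0: "hit L U P pr x xs 0 \<longleftrightarrow> P x"
  by (simp add: hit_def)

lemma hit_Cons: "hit L U P pr x (b # ys) (Suc k) \<longleftrightarrow>
   P x \<or> (L < x \<and> x < U \<and> hit L U P b (x + stp pr b) ys k)"
proof
  assume "hit L U P pr x (b # ys) (Suc k)"
  then obtain l where l: "l \<le> Suc k" "P (Sg pr x (b#ys) l)"
    "\<forall>j<l. L < Sg pr x (b#ys) j \<and> Sg pr x (b#ys) j < U" by (auto simp: hit_def)
  show "P x \<or> (L < x \<and> x < U \<and> hit L U P b (x + stp pr b) ys k)"
  proof (cases l)
    case 0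
    then show ?thesis using l by simp
  next
    case (Suc l')
    have "L < x \<and> x < U" using l(3) Suc by (metis Sg_0 zero_less_Suc)
    moreover have "hit L U P b (x + stp pr b) ys k"
      unfolding hit_def
    proof (intro exI[of _ l'] conjI allI impI)
      show "l' \<le> k" using l Suc by simp
      show "P (Sg b (x + stp pr b) ys l')" using l(2) Suc by (simp add: Sg_Cons)
      fix j assume "j < l'"
      then have "Suc j < l" using Suc by simp
      then show "L < Sg b (x + stp pr b) ys j" "Sg b (x + stp pr b) ys j < U"
        using l(3) by (auto simp: Sg_Cons[symmetric])
    qed
    ultimately show ?thesis by blast
  qed
next
  assume a: "P x \<or> (L < x \<and> x < U \<and> hit L U P b (x + stp pr b) ys k)"
  show "hit L U P pr x (b # ys) (Suc k)"
  proof (cases "P x")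
    case True
    then show ?thesis unfolding hit_def by (intro exI[of _ 0]) simp
  next
    case False
    then have x: "L < x" "x < U" and h: "hit L U P b (x + stp pr b) ys k" using a by auto
    from h obtain l where l: "l \<le> k" "P (Sg b (x + stp pr b) ys l)"
      "\<forall>j<l. L < Sg b (x + stp pr b) ys j \<and> Sg b (x + stp pr b) ys j < U" by (auto simp: hit_def)
    show ?thesis unfolding hit_def
    proof (intro exI[of _ "Suc l"] conjI allI impI)
      show "Suc l \<le> Suc k" using l by simp
      show "P (Sg pr x (b # ys) (Suc l))" using l by (simp add: Sg_Cons)
      fix j assume j: "j < Suc l"
      have "L < Sg pr x (b # ys) j \<and> Sg pr x (b # ys) j < U"
      proof (cases j)
        case 0 then show ?thesis using x by simp
      next
        case (Suc j') then show ?thesis using l(3) j by (simp add: Sg_Cons)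
      qed
      then show "L < Sg pr x (b # ys) j" "Sg pr x (b # ys) j < U" by auto
    qed
  qed
qed

lemma sum_lists_Suc:
  "(\<Sum>xs\<in>{xs :: bool list. length xs = Suc k}. F xs) =
   (\<Sum>ys\<in>{ys :: bool list. length ys = k}. F (True # ys) + F (False # ys))"
proof -
  let ?S = "{ys :: bool list. length ys = k}"
  have fin: "finite ?S" using finite_lists_length_eq[of "UNIV :: bool set" k] by simp
  have eq: "{xs :: bool list. length xs = Suc k} = Cons True ` ?S \<union> Cons False ` ?S"
  proof (rule set_eqI)
    fix xs :: "bool list"
    show "xs \<in> {xs. length xs = Suc k} \<longleftrightarrow> xs \<in> Cons True ` ?S \<union> Cons False ` ?S"
      by (cases xs) auto
  qed
  have "(\<Sum>xs\<in>{xs :: bool list. length xs = Suc k}. F xs) =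
        (\<Sum>xs\<in>Cons True ` ?S. F xs) + (\<Sum>xs\<in>Cons False ` ?S. F xs)"
    unfolding eq by (rule sum.union_disjoint) (use fin in auto)
  also have "\<dots> = (\<Sum>ys\<in>?S. F (True # ys)) + (\<Sum>ys\<in>?S. F (False # ys))"
    by (simp add: sum.reindex)
  finally show ?thesis by (simp add: sum.distrib)
qed

lemma seq_weight_Cons: "seq_weight p (b # ys) = (if b then p else 1 - p) * seq_weight p ys"
  by (simp add: seq_weight_def)

lemma seq_weight_TF: "seq_weight p (True # ys) = p * seq_weight p ys"
  "seq_weight p (False # ys) = (1 - p) * seq_weight p ys"
  by (simp_all add: seq_weight_def)

lemma sum_weights: "(\<Sum>xs\<in>{xs :: bool list. length xs = k}. seq_weight p xs) = 1"
proof (induction k)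
  case 0
  have "{xs :: bool list. length xs = 0} = {[]}" by auto
  then show ?case by (simp add: seq_weight_def)
next
  case (Suc k)
  then show ?case
    by (simp add: sum_lists_Suc seq_weight_Cons sum.distrib[symmetric] distrib_right[symmetric])
qed

definition V :: "int \<Rightarrow> int \<Rightarrow> real \<Rightarrow> (int \<Rightarrow> bool) \<Rightarrow> nat \<Rightarrow> bool \<Rightarrow> int \<Rightarrow> real" where
  "V L U p P k pr x = (\<Sum>xs\<in>{xs :: bool list. length xs = k}.
      if hit L U P pr x xs k then seq_weight p xs else 0)"

lemma V_0: "V L U p P 0 pr x = (if P x then 1 else 0)"
proof -
  have "{xs :: bool list. length xs = 0} = {[]}" by auto
  then show ?thesis by (simp add: V_def hit_0 seq_weight_def)
qed

lemma V_Suc: "V L U p P (Suc k) pr x =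
  (if P x then 1 else if L < x \<and> x < U then
     (1 - p) * V L U p P k False (x - 1) + p * V L U p P k True (x + (if pr then 2 else 1))
   else 0)"
proof (cases "P x")
  case True
  have "hit L U P pr x xs (Suc k)" if "length xs = Suc k" for xs
    using that True by (cases xs) (auto simp: hit_Cons)
  then have "V L U p P (Suc k) pr x = (\<Sum>xs\<in>{xs :: bool list. length xs = Suc k}. seq_weight p xs)"
    unfolding V_def by (intro sum.cong) auto
  then show ?thesis using True sum_weights[where k="Suc k" and p=p] by simp
next
  case False
  show ?thesis
  proof (cases "L < x \<and> x < U")
    case True
    have m: "\<And>c b w. c * (if b then w else 0) = (if b then c * w else (0::real))" by simp
    have "V L U p P (Suc k) pr x = (\<Sum>ys\<in>{ys :: bool list. length ys = k}.
       (if hit L U P True (x + (if pr then 2 else 1)) ys k then p * seq_weight p ys else 0) +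
       (if hit L U P False (x - 1) ys k then (1 - p) * seq_weight p ys else 0))"
      unfolding V_def sum_lists_Suc using True False by (intro sum.cong refl) (simp add: hit_Cons seq_weight_TF stp_def)
    also have "\<dots> = (1 - p) * V L U p P k False (x - 1) + p * V L U p P k True (x + (if pr then 2 else 1))"
      unfolding V_def sum_distrib_left m sum.distrib by simp
    finally show ?thesis using True False by simp
  next
    case F2: False
    have "V L U p P (Suc k) pr x = 0"
      unfolding V_def sum_lists_Suc using F2 False by (intro sum.neutral) (auto simp: hit_Cons)
    then show ?thesis using False F2 by auto
  qed
qed


lemma V_bounds:
  assumes "0 \<le> p" "p \<le> 1"
  shows "0 \<le> V L U p P k pr x \<and> V L U p P k pr x \<le> 1"
  using assms
proof (induction k arbitrary: pr x)
  case 0 then show ?case by (simp add: V_0)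
next
  case (Suc k)
  have a: "0 \<le> V L U p P k False (x - 1)" "V L U p P k False (x - 1) \<le> 1"
    "0 \<le> V L U p P k True (x + (if pr then 2 else 1))" "V L U p P k True (x + (if pr then 2 else 1)) \<le> 1"
    using Suc by auto
  have "(1 - p) * V L U p P k False (x - 1) + p * V L U p P k True (x + (if pr then 2 else 1))
        \<le> (1 - p) * 1 + p * 1"
    using a assms by (intro add_mono mult_left_mono) auto
  moreover have "0 \<le> (1 - p) * V L U p P k False (x - 1) + p * V L U p P k True (x + (if pr then 2 else 1))"
    using a assms by simp
  ultimately show ?case by (simp add: V_Suc)
qed

lemma V_mono:
  assumes "0 \<le> p" "p \<le> 1"
  shows "V L U p P k pr x \<le> V L U p P (Suc k) pr x"
  using assms
proof (induction k arbitrary: pr x)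
  case 0 then show ?case using V_bounds[OF assms, of L U P "Suc 0" pr x] by (simp add: V_0 V_Suc)
next
  case (Suc k)
  have a: "V L U p P k False (x - 1) \<le> V L U p P (Suc k) False (x - 1)"
    "V L U p P k True (x + (if pr then 2 else 1)) \<le> V L U p P (Suc k) True (x + (if pr then 2 else 1))"
    using Suc by auto
  have "(1 - p) * V L U p P k False (x - 1) + p * V L U p P k True (x + (if pr then 2 else 1))
        \<le> (1 - p) * V L U p P (Suc k) False (x - 1) + p * V L U p P (Suc k) True (x + (if pr then 2 else 1))"
    using a assms by (intro add_mono mult_left_mono) auto
  then show ?case unfolding V_Suc[of L U p P k pr x] V_Suc[of L U p P "Suc k" pr x] by simp
qed

definition LV :: "int \<Rightarrow> int \<Rightarrow> real \<Rightarrow> (int \<Rightarrow> bool) \<Rightarrow> bool \<Rightarrow> int \<Rightarrow> real" where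
  "LV L U p P pr x = lim (\<lambda>k. V L U p P k pr x)"

lemma V_lim:
  assumes "0 \<le> p" "p \<le> 1"
  shows "(\<lambda>k. V L U p P k pr x) \<longlonglongrightarrow> LV L U p P pr x"
proof -
  have inc: "incseq (\<lambda>k. V L U p P k pr x)"
    using V_mono[OF assms] by (intro incseq_SucI) auto
  have "bdd_above (range (\<lambda>k. V L U p P k pr x))"
    using V_bounds[OF assms] by (intro bdd_aboveI[of _ 1]) auto
  then have "(\<lambda>k. V L U p P k pr x) \<longlonglongrightarrow> (SUP k. V L U p P k pr x)"
    using LIMSEQ_incseq_SUP inc by blast
  then have "convergent (\<lambda>k. V L U p P k pr x)" by (auto simp: convergent_def)
  then show ?thesis unfolding LV_def by (simp add: convergent_LIMSEQ_iff)
qed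

lemma LV_rec:
  assumes "0 \<le> p" "p \<le> 1" "\<not> P x" "L < x" "x < U"
  shows "LV L U p P pr x = (1 - p) * LV L U p P False (x - 1) + p * LV L U p P True (x + (if pr then 2 else 1))"
proof -
  have "(\<lambda>k. V L U p P (Suc k) pr x) \<longlonglongrightarrow> LV L U p P pr x"
    using V_lim[OF assms(1,2)] by (rule LIMSEQ_Suc)
  moreover have "(\<lambda>k. V L U p P (Suc k) pr x) = (\<lambda>k. (1 - p) * V L U p P k False (x - 1) + p * V L U p P k True (x + (if pr then 2 else 1)))"
    using assms by (simp add: V_Suc)
  moreover have "(\<lambda>k. (1 - p) * V L U p P k False (x - 1) + p * V L U p P k True (x + (if pr then 2 else 1)))
     \<longlonglongrightarrow> (1 - p) * LV L U p P False (x - 1) + p * LV L U p P True (x + (if pr then 2 else 1))"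
    by (intro tendsto_intros V_lim assms)
  ultimately show ?thesis using LIMSEQ_unique by metis
qed

lemma LV_const:
  assumes "0 \<le> p" "p \<le> 1" "P x \<or> \<not> (L < x \<and> x < U)"
  shows "LV L U p P pr x = (if P x then 1 else 0)"
proof -
  have "(\<lambda>k. V L U p P (Suc k) pr x) \<longlonglongrightarrow> LV L U p P pr x"
    using V_lim[OF assms(1,2)] by (rule LIMSEQ_Suc)
  moreover have "(\<lambda>k. V L U p P (Suc k) pr x) = (\<lambda>k. (if P x then 1 else 0))"
    using assms by (auto simp: V_Suc)
  ultimately show ?thesis using LIMSEQ_unique tendsto_const by metis
qed

lemma Xstep_Xg: "1 \<le> i \<Longrightarrow> Xstep xs i = Xg False xs i"
  by (auto simp: Xstep_def Xg_def)

lemma Sx_Sg: "Sx x xs l = Sg False x xs l"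
  unfolding Sx_def Sg_def Ssum_def by (auto intro!: sum.cong simp: Xstep_Xg)

lemma tau_char:
  assumes "l \<le> k" "Sx x xs l \<le> L \<or> U \<le> Sx x xs l"
  shows "tau L U x k xs = l \<longleftrightarrow> (\<forall>j<l. L < Sx x xs j \<and> Sx x xs j < U)"
proof -
  have ex: "\<exists>l\<le>k. Sx x xs l \<le> L \<or> Sx x xs l \<ge> U" using assms by auto
  let ?Q = "\<lambda>l. l \<le> k \<and> (Sx x xs l \<le> L \<or> Sx x xs l \<ge> U)"
  have t: "tau L U x k xs = (LEAST l. ?Q l)" using ex by (simp add: tau_def)
  show ?thesis
  proof
    assume "tau L U x k xs = l"
    then have l: "l = (LEAST l. ?Q l)" using t by simp
    show "\<forall>j<l. L < Sx x xs j \<and> Sx x xs j < U"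
    proof (intro allI impI)
      fix j assume "j < l"
      then have "\<not> ?Q j" using l not_less_Least by blast
      then show "L < Sx x xs j \<and> Sx x xs j < U" using \<open>j < l\<close> assms(1) by auto
    qed
  next
    assume h: "\<forall>j<l. L < Sx x xs j \<and> Sx x xs j < U"
    have "(LEAST l. ?Q l) = l"
      by (rule Least_equality) (use assms h in \<open>auto simp: not_less[symmetric]\<close>)
    then show "tau L U x k xs = l" using t by simp
  qed
qed

lemma eventA_hit: "eventA L U x k xs \<longleftrightarrow> hit L U (\<lambda>s. s \<le> L) False x xs k"
proof -
  have h: "\<And>l. l \<le> k \<Longrightarrow> Sx x xs l \<le> L \<Longrightarrow> (tau L U x k xs = l \<longleftrightarrow> (\<forall>j<l. L < Sx x xs j \<and> Sx x xs j < U))"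
    using tau_char by blast
  show ?thesis unfolding eventA_def hit_def Sx_Sg[symmetric]
  proof
    assume "\<exists>l\<le>k. tau L U x k xs = l \<and> Sx x xs l \<le> L"
    then obtain l where "l \<le> k" "tau L U x k xs = l" "Sx x xs l \<le> L" by blast
    then show "\<exists>l\<le>k. Sx x xs l \<le> L \<and> (\<forall>j<l. L < Sx x xs j \<and> Sx x xs j < U)" using h by blast
  next
    assume "\<exists>l\<le>k. Sx x xs l \<le> L \<and> (\<forall>j<l. L < Sx x xs j \<and> Sx x xs j < U)"
    then obtain l where "l \<le> k" "Sx x xs l \<le> L" "\<forall>j<l. L < Sx x xs j \<and> Sx x xs j < U" by blast
    then show "\<exists>l\<le>k. tau L U x k xs = l \<and> Sx x xs l \<le> L" using h by blast
  qed
qed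

lemma eventB_hit: "eventB L U x k xs \<longleftrightarrow> hit L U (\<lambda>s. U \<le> s) False x xs k"
proof -
  have h: "\<And>l. l \<le> k \<Longrightarrow> U \<le> Sx x xs l \<Longrightarrow> (tau L U x k xs = l \<longleftrightarrow> (\<forall>j<l. L < Sx x xs j \<and> Sx x xs j < U))"
    using tau_char by blast
  show ?thesis unfolding eventB_def hit_def Sx_Sg[symmetric]
  proof
    assume "\<exists>l\<le>k. tau L U x k xs = l \<and> U \<le> Sx x xs l"
    then obtain l where "l \<le> k" "tau L U x k xs = l" "U \<le> Sx x xs l" by blast
    then show "\<exists>l\<le>k. U \<le> Sx x xs l \<and> (\<forall>j<l. L < Sx x xs j \<and> Sx x xs j < U)" using h by blast
  next
    assume "\<exists>l\<le>k. U \<le> Sx x xs l \<and> (\<forall>j<l. L < Sx x xs j \<and> Sx x xs j < U)"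
    then obtain l where "l \<le> k" "U \<le> Sx x xs l" "\<forall>j<l. L < Sx x xs j \<and> Sx x xs j < U" by blast
    then show "\<exists>l\<le>k. tau L U x k xs = l \<and> U \<le> Sx x xs l" using h by blast
  qed
qed

lemma alpha_LV: "alpha p L U x = LV L U p (\<lambda>s. s \<le> L) False x"
  unfolding alpha_def LV_def alpha_k_def V_def by (simp add: eventA_hit)

lemma beta_LV: "beta p L U x = LV L U p (\<lambda>s. U \<le> s) False x"
  unfolding beta_def LV_def beta_k_def V_def by (simp add: eventB_hit)


definition hom :: "real \<Rightarrow> real \<Rightarrow> int \<Rightarrow> int \<Rightarrow> (int \<Rightarrow> real) \<Rightarrow> bool" where
  "hom p q L U d \<longleftrightarrow> d U = 0 \<and> d (U - 1) = q * d (U - 2) \<and>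
     d (U - 2) = p * q * d (U - 2) + q * d (U - 3) \<and>
     (\<forall>x. L + 1 \<le> x \<and> x \<le> U - 3 \<longrightarrow>
        d x = p * q * d x + p * d (x + 2) - p * q * d (x + 1) + q * d (x - 1))"

lemma hom_pos:
  assumes p: "0 < p" "p < 1" "q = 1 - p" and LU: "U - L \<ge> 4"
    and h: "hom p q L U d" and t: "d (U - 2) > 0"
  shows "d L > 0"
proof -
  have q: "0 < q" "q < 1" using p by auto
  have pq: "p = 1 - q" using p by simp
  note hd = h[unfolded hom_def]
  define G where "G y = (if y \<ge> U then 0 else (d (y - 1) - q * d (y - 2)) / p)" for y
  define J where "J x \<longleftrightarrow> d x > 0 \<and> 0 \<le> G (x + 1) \<and> G (x + 1) \<le> d x \<and> 0 \<le> G (x + 2) \<and> G (x + 2) \<le> d x" for x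
  have base: "J (U - 2)"
  proof -
    have "G (U - 1) = (d (U - 2) - q * d (U - 3)) / p" by (simp add: G_def)
    also have "d (U - 2) - q * d (U - 3) = p * (q * d (U - 2))" using hd by (simp add: algebra_simps)
    finally have g1: "G (U - 1) = q * d (U - 2)" using p by simp
    have "G U = 0" by (simp add: G_def)
    then show ?thesis unfolding J_def using g1 t q
      by (simp add: mult_le_cancel_right1 mult_nonneg_nonneg)
  qed
  have step: "J (x - 1)" if x: "L + 2 \<le> x" "x \<le> U - 2" and Jx: "J x" for x
  proof -
    have dx: "d x > 0" "0 \<le> G (x + 1)" "G (x + 1) \<le> d x" "0 \<le> G (x + 2)" "G (x + 2) \<le> d x"
      using Jx by (auto simp: J_def)
    have G1: "G (x + 1) = (d x - q * d (x - 1)) / p" using x by (simp add: G_def)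
    then have "d x - q * d (x - 1) \<le> p * d x" using dx(3) p by (simp add: divide_le_eq mult.commute)
    then have "q * d x \<le> q * d (x - 1)" using pq by (simp add: algebra_simps)
    then have dle: "d x \<le> d (x - 1)" using mult_left_le_imp_le q(1) by blast
    have eqi: "d (x - 1) = p * q * d (x - 1) + p * d (x + 1) - p * q * d x + q * d (x - 2)"
    proof -
      have r: "L + 1 \<le> x - 1 \<and> x - 1 \<le> U - 3" using x by simp
      have e0: "d (x - 1) = p * q * d (x - 1) + p * d (x - 1 + 2) - p * q * d (x - 1 + 1) + q * d (x - 1 - 1)"
        using hd r by blast
      have i: "x - 1 + 2 = x + 1" "x - 1 + 1 = x" "x - 1 - 1 = x - 2" by simp_all
      show ?thesis using e0 unfolding i .
    qed
    have G2: "d (x + 1) - q * d x = p * G (x + 2)"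
    proof (cases "x + 2 \<ge> U")
      case True
      then have "x = U - 2" using x by simp
      then show ?thesis using hd by (simp add: G_def)
    next
      case False
      have "G (x + 2) = (d (x + 2 - 1) - q * d (x + 2 - 2)) / p" using False by (simp add: G_def)
      moreover have "x + 2 - 1 = x + 1" "x + 2 - 2 = x" by simp_all
      ultimately show ?thesis using p by simp
    qed
    have G0: "G x = (d (x - 1) - q * d (x - 2)) / p" using x by (simp add: G_def)
    also have "d (x - 1) - q * d (x - 2) = p * (q * d (x - 1) + p * G (x + 2))"
      using eqi G2 by (simp add: algebra_simps)
    finally have Gx: "G x = q * d (x - 1) + p * G (x + 2)" using p by simp
    have "0 \<le> G x" using Gx dx dle q p by (simp add: add_nonneg_nonneg)
    moreover have "G x \<le> d (x - 1)"
    proof -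
      have "p * G (x + 2) \<le> p * d (x - 1)" using dx dle p by (intro mult_left_mono) auto
      moreover have "q * d (x - 1) + p * d (x - 1) = d (x - 1)"
        using p(3) by (simp add: distrib_right[symmetric])
      ultimately show ?thesis using Gx by linarith
    qed
    moreover have i: "x - 1 + 1 = x" "x - 1 + 2 = x + 1" by simp_all
    ultimately show ?thesis unfolding J_def i using dx dle by auto
  qed
  have all: "J (U - 2 - int n)" if "int n \<le> U - 3 - L" for n
    using that
  proof (induction n)
    case 0 then show ?case using base by simp
  next
    case (Suc n)
    have "J (U - 2 - int n - 1)"
      using Suc by (intro step) auto
    then show ?case by (simp add: algebra_simps)
  qed
  have "J (L + 1)" using all[of "nat (U - 3 - L)"] LU by (simp add: add.commute)
  moreover have e: "L + 1 + 1 = L + 2" by simp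
  ultimately have dL1: "d (L + 1) > 0" "G (L + 2) \<le> d (L + 1)" unfolding J_def e by blast+
  have "G (L + 2) = (d (L + 2 - 1) - q * d (L + 2 - 2)) / p" using LU by (simp add: G_def)
  moreover have "L + 2 - 1 = L + 1" "L + 2 - 2 = L" by simp_all
  ultimately have "G (L + 2) = (d (L + 1) - q * d L) / p" by simp
  then have "d (L + 1) - q * d L \<le> p * d (L + 1)" using dL1 p by (simp add: divide_le_eq mult.commute)
  then have "q * d (L + 1) \<le> q * d L" using pq by (simp add: algebra_simps)
  then have "d (L + 1) \<le> d L" using mult_left_le_imp_le q(1) by blast
  then show ?thesis using dL1 by simp
qed

lemma hom_neg: "hom p q L U d \<Longrightarrow> hom p q L U (\<lambda>x. - d x)"
  unfolding hom_def by (auto simp: algebra_simps)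

lemma hom_zero:
  assumes p: "0 < p" "p < 1" "q = 1 - p" and LU: "U - L \<ge> 4"
    and h: "hom p q L U d" and dL: "d L = 0"
  shows "\<forall>x\<in>{L..U}. d x = 0"
proof -
  have q: "0 < q" using p by simp
  note hd = h[unfolded hom_def]
  have t: "d (U - 2) = 0"
  proof (rule ccontr)
    assume "d (U - 2) \<noteq> 0"
    then consider "d (U - 2) > 0" | "(\<lambda>x. - d x) (U - 2) > 0" by force
    then show False
    proof cases
      case 1 then show False using hom_pos[OF p LU h] dL by simp
    next
      case 2 then show False using hom_pos[OF p LU hom_neg[OF h]] dL by simp
    qed
  qed
  have d1: "d (U - 1) = 0" using hd t by simp
  have d3: "d (U - 3) = 0" using hd t q by simp
  have all: "d (U - 2 - int n) = 0 \<and> d (U - 1 - int n) = 0 \<and> d (U - int n) = 0"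
    if "int n \<le> U - 2 - L" for n
    using that
  proof (induction n)
    case 0 then show ?case using t d1 hd by simp
  next
    case (Suc n)
    have IH: "d (U - 2 - int n) = 0" "d (U - 1 - int n) = 0" "d (U - int n) = 0" using Suc by auto
    have new: "d (U - 3 - int n) = 0"
    proof (cases n)
      case 0 then show ?thesis using d3 by simp
    next
      case (Suc m)
      let ?x = "U - 2 - int n"
      have e: "d ?x = p * q * d ?x + p * d (?x + 2) - p * q * d (?x + 1) + q * d (?x - 1)"
        using hd Suc.prems Suc by (auto dest: spec[of _ ?x])
      have i: "?x + 1 = U - 1 - int n" "?x + 2 = U - int n" "?x - 1 = U - 3 - int n" by auto
      have z: "d (?x + 1) = 0" "d (?x + 2) = 0" "d ?x = 0" using IH unfolding i by auto
      have "q * d (?x - 1) = 0" using e unfolding z by simp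
      then have "d (?x - 1) = 0" using q by simp
      then show ?thesis unfolding i .
    qed
    then show ?case using IH by (simp add: algebra_simps)
  qed
  show ?thesis
  proof
    fix x assume x: "x \<in> {L..U}"
    show "d x = 0"
    proof (cases "x \<le> U - 2")
      case True
      then show ?thesis using all[of "nat (U - 2 - x)"] x by simp
    next
      case False
      then have "x = U \<or> x = U - 1" using x by auto
      then show ?thesis using hd d1 by auto
    qed
  qed
qed


lemma sys_of_rec:
  fixes a c :: "int \<Rightarrow> real"
  assumes LU: "U - L \<ge> 4"
    and rec: "\<And>x. L < x \<Longrightarrow> x < U \<Longrightarrow> a x = q * a (x - 1) + p * c (x + 1) \<and> c x = q * a (x - 1) + p * c (x + 2)"
    and top: "\<And>x. U \<le> x \<Longrightarrow> a x = hi \<and> c x = hi"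
  shows "a U = hi \<and> a (U - 1) = p * hi + q * a (U - 2) \<and>
     a (U - 2) = p^2 * hi + p * q * a (U - 2) + q * a (U - 3) \<and>
     (\<forall>x. L + 1 \<le> x \<and> x \<le> U - 3 \<longrightarrow> a x = p * q * a x + p * a (x + 2) - p * q * a (x + 1) + q * a (x - 1))"
proof (intro conjI allI impI)
  show "a U = hi" using top by simp
  have "a (U - 1) = q * a (U - 1 - 1) + p * c (U - 1 + 1)" using rec[of "U - 1"] LU by simp
  then show "a (U - 1) = p * hi + q * a (U - 2)" using top[of U] by simp
  have e1: "a (U - 2) = q * a (U - 2 - 1) + p * c (U - 2 + 1)" using rec[of "U - 2"] LU by simp
  have e2: "c (U - 1) = q * a (U - 1 - 1) + p * c (U - 1 + 2)" using rec[of "U - 1"] LU by simp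
  have i: "U - 2 - 1 = U - 3" "U - 2 + 1 = U - 1" "U - 1 - 1 = U - 2" "U - 1 + 2 = U + 1" by simp_all
  have "c (U + 1) = hi" using top[of "U + 1"] by simp
  then show "a (U - 2) = p^2 * hi + p * q * a (U - 2) + q * a (U - 3)"
    using e1 e2 unfolding i by (simp add: algebra_simps power2_eq_square)
next
  fix x assume x: "L + 1 \<le> x \<and> x \<le> U - 3"
  have e1: "a x = q * a (x - 1) + p * c (x + 1)" using rec[of x] x by simp
  have e2: "c (x + 1) = q * a (x + 1 - 1) + p * c (x + 1 + 2)" using rec[of "x + 1"] x by simp
  have e3: "a (x + 2) = q * a (x + 2 - 1) + p * c (x + 2 + 1)" using rec[of "x + 2"] x by simp
  have i: "x + 1 - 1 = x" "x + 1 + 2 = x + 3" "x + 2 - 1 = x + 1" "x + 2 + 1 = x + 3" by simp_all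
  have e2': "c (x + 1) = q * a x + p * c (x + 3)" using e2 unfolding i .
  have e3': "a (x + 2) = q * a (x + 1) + p * c (x + 3)" using e3 unfolding i .
  have "p * q * a x + p * a (x + 2) - p * q * a (x + 1) + q * a (x - 1) = p * (q * a x + p * c (x + 3)) + q * a (x - 1)"
    unfolding e3' by (simp add: algebra_simps)
  also have "\<dots> = p * c (x + 1) + q * a (x - 1)" unfolding e2' ..
  also have "\<dots> = a x" using e1 by simp
  finally show "a x = p * q * a x + p * a (x + 2) - p * q * a (x + 1) + q * a (x - 1)" by simp
qed

definition sysg :: "real \<Rightarrow> real \<Rightarrow> int \<Rightarrow> int \<Rightarrow> real \<Rightarrow> real \<Rightarrow> (int \<Rightarrow> real) \<Rightarrow> bool" where
  "sysg p q L U lo hi f \<longleftrightarrow> f U = hi \<and> f (U - 1) = p * hi + q * f (U - 2) \<and>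
     f (U - 2) = p^2 * hi + p * q * f (U - 2) + q * f (U - 3) \<and>
     (\<forall>x. L + 1 \<le> x \<and> x \<le> U - 3 \<longrightarrow> f x = p * q * f x + p * f (x + 2) - p * q * f (x + 1) + q * f (x - 1)) \<and>
     f L = lo"

lemma sysg_transfer:
  assumes LU: "U - L \<ge> 4" and g: "sysg p q L U lo hi g" and fg: "\<forall>x\<in>{L..U}. f x = g x"
  shows "sysg p q L U lo hi f"
proof -
  have r: "f y = g y" if "L \<le> y" "y \<le> U" for y using fg that by auto
  have a: "f U = g U" "f (U - 1) = g (U - 1)" "f (U - 2) = g (U - 2)" "f (U - 3) = g (U - 3)" "f L = g L"
    using LU by (auto intro!: r)
  have b: "f x = g x" "f (x + 2) = g (x + 2)" "f (x + 1) = g (x + 1)" "f (x - 1) = g (x - 1)"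
    if "L + 1 \<le> x \<and> x \<le> U - 3" for x using that by (auto intro!: r)
  show ?thesis using g unfolding sysg_def a by (simp add: b)
qed

lemma sysg_unique:
  assumes p: "0 < p" "p < 1" "q = 1 - p" and LU: "U - L \<ge> 4"
    and f: "sysg p q L U lo hi f" and g: "sysg p q L U lo hi g"
  shows "\<forall>x\<in>{L..U}. f x = g x"
proof -
  have "hom p q L U (\<lambda>x. f x - g x)" unfolding hom_def
  proof (intro conjI allI impI)
    show "f U - g U = 0" using f g by (simp add: sysg_def)
    have "f (U - 1) = p * hi + q * f (U - 2)" "g (U - 1) = p * hi + q * g (U - 2)"
      using f g by (simp_all add: sysg_def)
    then show "f (U - 1) - g (U - 1) = q * (f (U - 2) - g (U - 2))"
      by (simp only: right_diff_distrib; linarith)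
    have "f (U - 2) = p^2 * hi + p * q * f (U - 2) + q * f (U - 3)"
         "g (U - 2) = p^2 * hi + p * q * g (U - 2) + q * g (U - 3)"
      using f g by (simp_all add: sysg_def)
    then show "f (U - 2) - g (U - 2) = p * q * (f (U - 2) - g (U - 2)) + q * (f (U - 3) - g (U - 3))"
      by (simp only: right_diff_distrib; linarith)
  next
    fix x assume x: "L + 1 \<le> x \<and> x \<le> U - 3"
    have "f x = p * q * f x + p * f (x + 2) - p * q * f (x + 1) + q * f (x - 1)"
         "g x = p * q * g x + p * g (x + 2) - p * q * g (x + 1) + q * g (x - 1)"
      using f g x unfolding sysg_def by blast+
    then show "f x - g x = p * q * (f x - g x) + p * (f (x + 2) - g (x + 2)) - p * q * (f (x + 1) - g (x + 1)) + q * (f (x - 1) - g (x - 1))"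
      by (simp only: right_diff_distrib; linarith)
  qed
  moreover have "(\<lambda>x. f x - g x) L = 0" using f g by (simp add: sysg_def)
  ultimately have "\<forall>x\<in>{L..U}. f x - g x = 0" using hom_zero[OF p LU] by blast
  then show ?thesis by simp
qed

lemma sysg_iff:
  assumes p: "0 < p" "p < 1" "q = 1 - p" and LU: "U - L \<ge> 4"
    and g: "sysg p q L U lo hi g"
  shows "sysg p q L U lo hi f \<longleftrightarrow> (\<forall>x\<in>{L..U}. f x = g x)"
  using sysg_unique[OF p LU _ g] sysg_transfer[OF LU g] by blast

lemma alpha_sys:
  assumes p: "0 < p" "p < 1" "q = 1 - p" and LU: "L < U" "U - L \<ge> 4"
  shows "sysg p q L U 1 0 (alpha p L U)"
proof -
  let ?P = "\<lambda>s. s \<le> L"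
  have p01: "0 \<le> p" "p \<le> 1" using p by auto
  have s: "alpha p L U U = 0 \<and> alpha p L U (U - 1) = p * 0 + q * alpha p L U (U - 2) \<and>
     alpha p L U (U - 2) = p^2 * 0 + p * q * alpha p L U (U - 2) + q * alpha p L U (U - 3) \<and>
     (\<forall>x. L + 1 \<le> x \<and> x \<le> U - 3 \<longrightarrow> alpha p L U x = p * q * alpha p L U x + p * alpha p L U (x + 2) - p * q * alpha p L U (x + 1) + q * alpha p L U (x - 1))"
    unfolding alpha_LV
  proof (rule sys_of_rec[where c = "LV L U p ?P True"])
    show "U - L \<ge> 4" by fact
    fix x assume x: "L < x" "x < U"
    show "LV L U p ?P False x = q * LV L U p ?P False (x - 1) + p * LV L U p ?P True (x + 1) \<and>
          LV L U p ?P True x = q * LV L U p ?P False (x - 1) + p * LV L U p ?P True (x + 2)"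
      using LV_rec[OF p01, of ?P x L U] x p(3) by simp
  next
    fix x assume x: "U \<le> x"
    show "LV L U p ?P False x = 0 \<and> LV L U p ?P True x = 0"
      using LV_const[OF p01, of ?P x L U] x LU by simp
  qed
  have "alpha p L U L = 1" unfolding alpha_LV using LV_const[OF p01, of ?P L L U] by simp
  then show ?thesis using s unfolding sysg_def by simp
qed

lemma beta_sys:
  assumes p: "0 < p" "p < 1" "q = 1 - p" and LU: "L < U" "U - L \<ge> 4"
  shows "sysg p q L U 0 1 (beta p L U)"
proof -
  let ?P = "\<lambda>s. U \<le> s"
  have p01: "0 \<le> p" "p \<le> 1" using p by auto
  have s: "beta p L U U = 1 \<and> beta p L U (U - 1) = p * 1 + q * beta p L U (U - 2) \<and>
     beta p L U (U - 2) = p^2 * 1 + p * q * beta p L U (U - 2) + q * beta p L U (U - 3) \<and>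
     (\<forall>x. L + 1 \<le> x \<and> x \<le> U - 3 \<longrightarrow> beta p L U x = p * q * beta p L U x + p * beta p L U (x + 2) - p * q * beta p L U (x + 1) + q * beta p L U (x - 1))"
    unfolding beta_LV
  proof (rule sys_of_rec[where c = "LV L U p ?P True"])
    show "U - L \<ge> 4" by fact
    fix x assume x: "L < x" "x < U"
    show "LV L U p ?P False x = q * LV L U p ?P False (x - 1) + p * LV L U p ?P True (x + 1) \<and>
          LV L U p ?P True x = q * LV L U p ?P False (x - 1) + p * LV L U p ?P True (x + 2)"
      using LV_rec[OF p01, of ?P x L U] x p(3) by simp
  next
    fix x assume x: "U \<le> x"
    show "LV L U p ?P False x = 1 \<and> LV L U p ?P True x = 1"
      using LV_const[OF p01, of ?P x L U] x LU by simp
  qed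
  have "beta p L U L = 0" unfolding beta_LV using LV_const[OF p01, of ?P L L U] LU by simp
  then show ?thesis using s unfolding sysg_def by simp
qed

theorem theorem2p2:
  fixes p q :: real and L U :: int
  assumes "0 < p" "p < 1" "q = 1 - p" "L < U" "U - L \<ge> 4"
  shows "(\<forall>f :: int \<Rightarrow> real.
           (f U = 0 \<and>
            f (U - 1) = q * f (U - 2) \<and>
            f (U - 2) = p * q * f (U - 2) + q * f (U - 3) \<and>
            (\<forall>x. L + 1 \<le> x \<and> x \<le> U - 3 \<longrightarrow>
                 f x = p * q * f x + p * f (x + 2) - p * q * f (x + 1) + q * f (x - 1)) \<and>
            f L = 1)
           \<longleftrightarrow> (\<forall>x\<in>{L..U}. f x = alpha p L U x)) \<and>
         (\<forall>f :: int \<Rightarrow> real.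
           (f U = 1 \<and>
            f (U - 1) = p + q * f (U - 2) \<and>
            f (U - 2) = p^2 + p * q * f (U - 2) + q * f (U - 3) \<and>
            (\<forall>x. L + 1 \<le> x \<and> x \<le> U - 3 \<longrightarrow>
                 f x = p * q * f x + p * f (x + 2) - p * q * f (x + 1) + q * f (x - 1)) \<and>
            f L = 0)
           \<longleftrightarrow> (\<forall>x\<in>{L..U}. f x = beta p L U x))"
proof (intro conjI allI)
  fix f :: "int \<Rightarrow> real"
  have "sysg p q L U 1 0 f \<longleftrightarrow> (\<forall>x\<in>{L..U}. f x = alpha p L U x)"
    using sysg_iff[OF assms(1,2,3,5) alpha_sys[OF assms]] .
  then show "(f U = 0 \<and>
            f (U - 1) = q * f (U - 2) \<and>
            f (U - 2) = p * q * f (U - 2) + q * f (U - 3) \<and>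
            (\<forall>x. L + 1 \<le> x \<and> x \<le> U - 3 \<longrightarrow>
                 f x = p * q * f x + p * f (x + 2) - p * q * f (x + 1) + q * f (x - 1)) \<and>
            f L = 1)
           \<longleftrightarrow> (\<forall>x\<in>{L..U}. f x = alpha p L U x)" by (simp add: sysg_def)
next
  fix f :: "int \<Rightarrow> real"
  have "sysg p q L U 0 1 f \<longleftrightarrow> (\<forall>x\<in>{L..U}. f x = beta p L U x)"
    using sysg_iff[OF assms(1,2,3,5) beta_sys[OF assms]] .
  then show "(f U = 1 \<and>
            f (U - 1) = p + q * f (U - 2) \<and>
            f (U - 2) = p^2 + p * q * f (U - 2) + q * f (U - 3) \<and>
            (\<forall>x. L + 1 \<le> x \<and> x \<le> U - 3 \<longrightarrow>
                 f x = p * q * f x + p * f (x + 2) - p * q * f (x + 1) + q * f (x - 1)) \<and>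
            f L = 0)
           \<longleftrightarrow> (\<forall>x\<in>{L..U}. f x = beta p L U x)" by (simp add: sysg_def)
qed

end
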